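(* Let $\tau=t^{1/2}$ and $[2]_t=t^{1/2}+t^{-1/2}$. The infinite product $$\prod_{n\geq1}\frac{1}{(1+t^{-\frac12}qu^n)(1+t^{\frac12}q^{-1}u^n)(1+t^{\frac12}qu^n)(1+t^{-\frac12}q^{-1}u^n)(1-u^n)^{18}(1-tu^n)(1-t^{-1}u^n)}$$ can be written as $$\sum_{h=0}^\infty\sum_{g=0}^h n^h_g(t)\,\big(q^{-1}+[2]_t+q\big)^g u^h,$$ where each $n^h_g(t)\in\mathbb Q[\tau^{\pm1}]$ is a Laurent polynomial in $\tau$ invariant under $\tau\mapsto\tau^{-1}$.
   Context: The product is expanded as a formal power series in $u$ whose coefficients are Laurent polynomials in $q$ and $\tau=t^{1/2}$. *)

theory Defs
  imports "HOL-Library.Poly_Mapping" "HOL-Library.Product_Plus"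
          "HOL-Computational_Algebra.Formal_Power_Series"
begin

text \<open>Laurent polynomials over Q in the two variables q and tau = t^(1/2):
  a monomial q^a tau^b is encoded by the exponent pair (a,b).\<close>
type_synonym laurent2 = "(int \<times> int) \<Rightarrow>\<^sub>0 rat"

definition mono2 :: "int \<Rightarrow> int \<Rightarrow> laurent2" where
  "mono2 a b = Poly_Mapping.single (a, b) 1"

definition qv :: laurent2 where "qv = mono2 1 0"
definition qinv :: laurent2 where "qinv = mono2 (-1) 0"
definition tau :: laurent2 where "tau = mono2 0 1"
definition tauinv :: laurent2 where "tauinv = mono2 0 (-1)"

text \<open>Expansion of 1/(1 - c u^n) (n \<ge> 1) as a formal power series in u.\<close>
definition geom_inv :: "laurent2 \<Rightarrow> nat \<Rightarrow> laurent2 fps" where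
  "geom_inv c n = Abs_fps (\<lambda>k. if n dvd k then c ^ (k div n) else 0)"

definition prod_factor :: "nat \<Rightarrow> laurent2 fps" where
  "prod_factor n =
     geom_inv (- (tauinv * qv)) n * geom_inv (- (tau * qinv)) n *
     geom_inv (- (tau * qv)) n * geom_inv (- (tauinv * qinv)) n *
     geom_inv 1 n ^ 18 * geom_inv (tau ^ 2) n * geom_inv (tauinv ^ 2) n"

text \<open>The infinite product over n \<ge> 1: factors with n > h are 1 modulo u^(h+1),
  so the u^h coefficient is that of the finite product over 1..h.\<close>
definition infinite_product :: "laurent2 fps" where
  "infinite_product = Abs_fps (\<lambda>h. fps_nth (\<Prod>n\<in>{1..h}. prod_factor n) h)"

end

theory Submission imports Defs begin

lemma lookup_map_key_inv:
  fixes \<phi> :: "int \<times> int \<Rightarrow> int \<times> int"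
  assumes inv: "\<And>x. \<phi> (\<phi> x) = x"
  shows "Poly_Mapping.lookup (Poly_Mapping.map_key \<phi> (p::laurent2)) k = Poly_Mapping.lookup p (\<phi> k)"
proof -
  have "inj \<phi>" by (metis inv injI)
  then show ?thesis by (simp add: map_key.rep_eq)
qed

lemma map_key_mult:
  fixes \<phi> :: "int \<times> int \<Rightarrow> int \<times> int"
  assumes inv: "\<And>x. \<phi> (\<phi> x) = x" and add: "\<And>x y. \<phi> (x+y) = \<phi> x + \<phi> y"
  shows "Poly_Mapping.map_key \<phi> ((f::laurent2) * g) = Poly_Mapping.map_key \<phi> f * Poly_Mapping.map_key \<phi> g"
proof (rule poly_mapping_eqI)
  fix k
  have bij: "bij \<phi>" by (metis inv bijI injI surjI)
  have eq: "(k = l + q) = (\<phi> k = \<phi> l + \<phi> q)" for l q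
    by (metis add inv)
  have inner: "(\<Sum>q. Poly_Mapping.lookup g (\<phi> q) when k = l + q) = (\<Sum>q. Poly_Mapping.lookup g q when \<phi> k = \<phi> l + q)" for l
    by (rule Sum_any.reindex_cong[OF bij, symmetric]) (auto simp: fun_eq_iff eq)
  have "Poly_Mapping.lookup (Poly_Mapping.map_key \<phi> f * Poly_Mapping.map_key \<phi> g) k
     = (\<Sum>l. Poly_Mapping.lookup f (\<phi> l) * (\<Sum>q. Poly_Mapping.lookup g q when \<phi> k = \<phi> l + q))"
    by (simp add: lookup_mult lookup_map_key_inv[OF inv] inner)
  also have "\<dots> = (\<Sum>l. Poly_Mapping.lookup f l * (\<Sum>q. Poly_Mapping.lookup g q when \<phi> k = l + q))"
    by (rule Sum_any.reindex_cong[OF bij]) (auto simp: fun_eq_iff inv)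
  also have "\<dots> = Poly_Mapping.lookup (Poly_Mapping.map_key \<phi> (f*g)) k"
    by (simp add: lookup_mult lookup_map_key_inv[OF inv])
  finally show "Poly_Mapping.lookup (Poly_Mapping.map_key \<phi> (f*g)) k = Poly_Mapping.lookup (Poly_Mapping.map_key \<phi> f * Poly_Mapping.map_key \<phi> g) k" by simp
qed


definition good :: "(int \<times> int \<Rightarrow> int \<times> int) \<Rightarrow> bool" where
  "good \<phi> \<longleftrightarrow> (\<forall>x. \<phi> (\<phi> x) = x) \<and> (\<forall>x y. \<phi> (x+y) = \<phi> x + \<phi> y)"

abbreviation mk :: "(int \<times> int \<Rightarrow> int \<times> int) \<Rightarrow> laurent2 \<Rightarrow> laurent2" where
  "mk \<phi> p \<equiv> Poly_Mapping.map_key \<phi> p"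

lemma good_lookup: "good \<phi> \<Longrightarrow> Poly_Mapping.lookup (mk \<phi> p) k = Poly_Mapping.lookup p (\<phi> k)"
  unfolding good_def by (rule lookup_map_key_inv) auto

lemma good_zero: "good \<phi> \<Longrightarrow> \<phi> 0 = 0"
  unfolding good_def by (metis add_cancel_right_right)

lemma mk_mult: "good \<phi> \<Longrightarrow> mk \<phi> (p * r) = mk \<phi> p * mk \<phi> r"
  unfolding good_def by (rule map_key_mult) auto

lemma mk_add: "good \<phi> \<Longrightarrow> mk \<phi> (p + r) = mk \<phi> p + mk \<phi> r"
  by (rule poly_mapping_eqI) (simp add: good_lookup lookup_add)

lemma mk_diff: "good \<phi> \<Longrightarrow> mk \<phi> (p - r) = mk \<phi> p - mk \<phi> r"
  by (rule poly_mapping_eqI) (simp add: good_lookup lookup_minus)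

lemma mk_uminus: "good \<phi> \<Longrightarrow> mk \<phi> (- p) = - mk \<phi> p"
  by (rule poly_mapping_eqI) (simp add: good_lookup)

lemma mk_zero: "good \<phi> \<Longrightarrow> mk \<phi> 0 = 0"
  by (rule poly_mapping_eqI) (simp add: good_lookup)

lemma mk_one: "good \<phi> \<Longrightarrow> mk \<phi> 1 = 1"
proof (rule poly_mapping_eqI)
  fix k assume g: "good \<phi>"
  have "(\<phi> k = 0) = (k = 0)" using g good_zero unfolding good_def by metis
  then show "Poly_Mapping.lookup (mk \<phi> 1) k = Poly_Mapping.lookup 1 k"
    by (simp add: good_lookup[OF g] lookup_one)
qed

lemma mk_single: "good \<phi> \<Longrightarrow> mk \<phi> (Poly_Mapping.single k v) = Poly_Mapping.single (\<phi> k) v"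
proof (rule poly_mapping_eqI)
  fix x assume g: "good \<phi>"
  have "(k = \<phi> x) = (\<phi> k = x)" using g unfolding good_def by metis
  then show "Poly_Mapping.lookup (mk \<phi> (Poly_Mapping.single k v)) x = Poly_Mapping.lookup (Poly_Mapping.single (\<phi> k) v) x"
    by (simp add: good_lookup[OF g] lookup_single)
qed

lemma mk_power: "good \<phi> \<Longrightarrow> mk \<phi> (p ^ m) = mk \<phi> p ^ m"
  by (induction m) (simp_all add: mk_one mk_mult)

lemma mk_sum: "good \<phi> \<Longrightarrow> mk \<phi> (sum f A) = (\<Sum>x\<in>A. mk \<phi> (f x))"
  by (rule poly_mapping_eqI) (simp add: good_lookup lookup_sum)

definition fm :: "(int \<times> int \<Rightarrow> int \<times> int) \<Rightarrow> laurent2 fps \<Rightarrow> laurent2 fps" where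
  "fm \<phi> F = Abs_fps (\<lambda>n. mk \<phi> (fps_nth F n))"

lemma fm_nth [simp]: "fps_nth (fm \<phi> F) n = mk \<phi> (fps_nth F n)"
  by (simp add: fm_def)

lemma fm_mult: "good \<phi> \<Longrightarrow> fm \<phi> (F * G) = fm \<phi> F * fm \<phi> G"
  by (rule fps_ext) (simp add: fps_mult_nth mk_sum mk_mult)

lemma fm_one: "good \<phi> \<Longrightarrow> fm \<phi> 1 = 1"
  by (rule fps_ext) (simp add: mk_one mk_zero)

lemma fm_power: "good \<phi> \<Longrightarrow> fm \<phi> (F ^ m) = fm \<phi> F ^ m"
  by (induction m) (simp_all add: fm_one fm_mult)

lemma fm_prod: "good \<phi> \<Longrightarrow> fm \<phi> (prod f A) = (\<Prod>x\<in>A. fm \<phi> (f x))"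
  by (induction A rule: infinite_finite_induct) (simp_all add: fm_one fm_mult)

lemma fm_geom: "good \<phi> \<Longrightarrow> fm \<phi> (geom_inv c n) = geom_inv (mk \<phi> c) n"
  by (rule fps_ext) (simp add: geom_inv_def mk_power mk_zero)

definition phq :: "int \<times> int \<Rightarrow> int \<times> int" where "phq x = (- fst x, snd x)"
definition pht :: "int \<times> int \<Rightarrow> int \<times> int" where "pht x = (fst x, - snd x)"

lemma good_phq: "good phq" unfolding good_def phq_def by auto
lemma good_pht: "good pht" unfolding good_def pht_def by auto

lemma fm_factor_q: "fm phq (prod_factor n) = prod_factor n"
  unfolding prod_factor_def
  by (simp add: good_phq fm_mult fm_power fm_geom mk_mult mk_uminus mk_one mk_single mk_power
      qv_def qinv_def tau_def tauinv_def mono2_def phq_def ac_simps)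

lemma fm_factor_t: "fm pht (prod_factor n) = prod_factor n"
  unfolding prod_factor_def
  by (simp add: good_pht fm_mult fm_power fm_geom mk_mult mk_uminus mk_one mk_single mk_power
      qv_def qinv_def tau_def tauinv_def mono2_def pht_def ac_simps)

lemma inf_sym_q: "mk phq (fps_nth infinite_product h) = fps_nth infinite_product h"
proof -
  have "fm phq (\<Prod>n\<in>{1..h}. prod_factor n) = (\<Prod>n\<in>{1..h}. prod_factor n)"
    by (simp add: fm_prod good_phq fm_factor_q)
  then show ?thesis unfolding infinite_product_def by (metis fm_nth fps_nth_Abs_fps)
qed

lemma inf_sym_t: "mk pht (fps_nth infinite_product h) = fps_nth infinite_product h"
proof -
  have "fm pht (\<Prod>n\<in>{1..h}. prod_factor n) = (\<Prod>n\<in>{1..h}. prod_factor n)"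
    by (simp add: fm_prod good_pht fm_factor_t)
  then show ?thesis unfolding infinite_product_def by (metis fm_nth fps_nth_Abs_fps)
qed


definition qb :: "nat \<Rightarrow> laurent2 \<Rightarrow> bool" where
  "qb d p \<longleftrightarrow> (\<forall>x \<in> Poly_Mapping.keys p. \<bar>fst x\<bar> \<le> int d)"

lemma qb_iff: "qb d p \<longleftrightarrow> (\<forall>a b. \<bar>a\<bar> > int d \<longrightarrow> Poly_Mapping.lookup p (a,b) = 0)"
  unfolding qb_def by (force simp: in_keys_iff)

lemma qb_mono: "qb d p \<Longrightarrow> d \<le> e \<Longrightarrow> qb e p"
  unfolding qb_def by force

lemma qb_add: "qb d p \<Longrightarrow> qb d r \<Longrightarrow> qb d (p + r)"
  unfolding qb_iff by (simp add: lookup_add)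

lemma qb_diff: "qb d p \<Longrightarrow> qb d r \<Longrightarrow> qb d (p - r)"
  unfolding qb_iff by (simp add: lookup_minus)

lemma qb_uminus: "qb d p \<Longrightarrow> qb d (- p)"
  unfolding qb_iff by simp

lemma qb_zero: "qb d 0"
  unfolding qb_iff by simp

lemma qb_sum: "(\<And>x. x \<in> A \<Longrightarrow> qb d (f x)) \<Longrightarrow> qb d (sum f A)"
  by (induction A rule: infinite_finite_induct) (simp_all add: qb_zero qb_add)

lemma qb_mult: "qb d p \<Longrightarrow> qb e r \<Longrightarrow> qb (d + e) (p * r)"
proof -
  assume a: "qb d p" "qb e r"
  show ?thesis unfolding qb_def
  proof
    fix x assume "x \<in> Poly_Mapping.keys (p * r)"
    then obtain y z where "x = y + z" "y \<in> Poly_Mapping.keys p" "z \<in> Poly_Mapping.keys r"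
      using keys_mult by blast
    then show "\<bar>fst x\<bar> \<le> int (d + e)" using a unfolding qb_def by fastforce
  qed
qed

lemma qb_one: "qb 0 1"
  unfolding qb_iff by (simp add: lookup_one when_def zero_prod_def)

lemma qb_single: "\<bar>a\<bar> \<le> int d \<Longrightarrow> qb d (Poly_Mapping.single (a,b) v)"
  unfolding qb_iff by (auto simp: lookup_single when_def)

lemma qb_power: "qb d p \<Longrightarrow> qb (m * d) (p ^ m)"
  by (induction m) (simp_all add: qb_one qb_mult)

definition fb :: "laurent2 fps \<Rightarrow> bool" where
  "fb F \<longleftrightarrow> (\<forall>n. qb n (fps_nth F n))"

lemma fb_mult: "fb F \<Longrightarrow> fb G \<Longrightarrow> fb (F * G)"
  unfolding fb_def fps_mult_nth
  by (metis (no_types, lifting) atLeastAtMost_iff le_add_diff_inverse qb_mult qb_sum)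

lemma fb_one: "fb 1"
  unfolding fb_def by (simp add: qb_one qb_zero)

lemma fb_power: "fb F \<Longrightarrow> fb (F ^ m)"
  by (induction m) (simp_all add: fb_one fb_mult)

lemma fb_prod: "(\<And>x. x \<in> A \<Longrightarrow> fb (f x)) \<Longrightarrow> fb (prod f A)"
  by (induction A rule: infinite_finite_induct) (simp_all add: fb_one fb_mult)

lemma fb_geom: "qb 1 c \<Longrightarrow> n \<ge> 1 \<Longrightarrow> fb (geom_inv c n)"
  unfolding fb_def geom_inv_def
proof (intro allI)
  fix k assume c: "qb 1 c" and n: "n \<ge> 1"
  have "qb (k div n) (c ^ (k div n))" using qb_power[OF c, of "k div n"] by simp
  moreover have "k div n \<le> k" by (simp add: div_le_dividend)
  ultimately show "qb k (fps_nth (Abs_fps (\<lambda>k. if n dvd k then c ^ (k div n) else 0)) k)"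
    by (auto intro: qb_mono simp: qb_zero)
qed

lemma qb1_basic: "qb 1 qv" "qb 1 qinv" "qb 1 tau" "qb 1 tauinv" "qb 1 1"
  unfolding qv_def qinv_def tau_def tauinv_def mono2_def
  by (auto intro!: qb_single qb_mono[OF qb_one])

lemma qb1_mult0: "qb 1 p \<Longrightarrow> qb 0 r \<Longrightarrow> qb 1 (p * r)"
  using qb_mult[of 1 p 0 r] by simp

lemma qb0_basic: "qb 0 tau" "qb 0 tauinv"
  unfolding tau_def tauinv_def mono2_def by (auto intro!: qb_single)

lemma fb_factor: "n \<ge> 1 \<Longrightarrow> fb (prod_factor n)"
proof -
  assume n: "n \<ge> 1"
  have "qb 0 (tau ^ 2)" "qb 0 (tauinv ^ 2)" using qb_power[OF qb0_basic(1), of 2] qb_power[OF qb0_basic(2), of 2] by simp_all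
  then have "qb 1 (tau ^ 2)" "qb 1 (tauinv ^ 2)" by (auto intro: qb_mono)
  moreover have "qb 1 (- (tauinv * qv))" "qb 1 (- (tau * qinv))" "qb 1 (- (tau * qv))" "qb 1 (- (tauinv * qinv))"
    using qb1_mult0[OF qb1_basic(1) qb0_basic(1)] qb1_mult0[OF qb1_basic(1) qb0_basic(2)]
      qb1_mult0[OF qb1_basic(2) qb0_basic(1)] qb1_mult0[OF qb1_basic(2) qb0_basic(2)]
    by (auto intro!: qb_uminus simp: mult.commute)
  ultimately show ?thesis unfolding prod_factor_def
    using n qb1_basic(5) by (intro fb_mult fb_power fb_geom) auto
qed

lemma inf_qb: "qb h (fps_nth infinite_product h)"
proof -
  have "fb (\<Prod>n\<in>{1..h}. prod_factor n)" by (rule fb_prod) (simp add: fb_factor)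
  then show ?thesis unfolding infinite_product_def fb_def by simp
qed


lemma lookup_mult_single1:
  "Poly_Mapping.lookup ((f::laurent2) * Poly_Mapping.single k 1) x = Poly_Mapping.lookup f (x - k)"
proof -
  have inner: "(\<Sum>q. (Poly_Mapping.lookup (Poly_Mapping.single k (1::rat)) q when x = l + q)) = (1 when x = l + k)" for l
  proof -
    have "(\<Sum>q. (Poly_Mapping.lookup (Poly_Mapping.single k (1::rat)) q when x = l + q))
        = (\<Sum>q. ((1 when x = l + q) when k = q))"
      by (simp add: lookup_single when_commute)
    also have "\<dots> = (1 when x = l + k)" by (rule Sum_any_when_equal')
    finally show ?thesis .
  qed
  have "Poly_Mapping.lookup (f * Poly_Mapping.single k 1) x = (\<Sum>l. Poly_Mapping.lookup f l * (1 when x = l + k))"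
    by (simp add: lookup_mult inner)
  also have "\<dots> = (\<Sum>l. (Poly_Mapping.lookup f l when l = x - k))"
    by (rule Sum_any.cong) (auto simp: when_def algebra_simps)
  also have "\<dots> = Poly_Mapping.lookup f (x - k)" by simp
  finally show ?thesis .
qed

definition W :: laurent2 where "W = qinv + (tau + tauinv) + qv"

abbreviation sg :: "int \<Rightarrow> laurent2" where "sg a \<equiv> Poly_Mapping.single (a, 0) 1"

lemma qb_W: "qb 1 W"
  unfolding W_def using qb1_basic qb_add by auto

lemma W_power: "\<exists>r. qb m r \<and> W ^ (Suc m) = sg (int (Suc m)) + sg (- int (Suc m)) + r"
proof (induction m)
  case 0
  have "qb 0 (tau + tauinv)" using qb0_basic qb_add by auto
  moreover have "W ^ Suc 0 = sg (int (Suc 0)) + sg (- int (Suc 0)) + (tau + tauinv)"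
    by (simp add: W_def qv_def qinv_def mono2_def algebra_simps)
  ultimately show ?case by blast
next
  case (Suc m)
  then obtain r where r: "qb m r" "W ^ (Suc m) = sg (int (Suc m)) + sg (- int (Suc m)) + r" by blast
  let ?A = "sg (int (Suc m))" and ?B = "sg (- int (Suc m))" and ?T = "tau + tauinv"
  define r' where "r' = qv * ?B + qinv * ?A + ?T * ?A + ?T * ?B + W * r"
  have e1: "qv * ?A = sg (int (Suc (Suc m)))" unfolding qv_def mono2_def by (simp add: mult_single)
  have e2: "qinv * ?B = sg (- int (Suc (Suc m)))" unfolding qinv_def mono2_def by (simp add: mult_single)
  have "W ^ Suc (Suc m) = W * (?A + ?B + r)" using r(2) by simp
  also have "\<dots> = qv * ?A + qinv * ?B + r'" unfolding r'_def W_def by (simp add: algebra_simps)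
  finally have eq: "W ^ Suc (Suc m) = sg (int (Suc (Suc m))) + sg (- int (Suc (Suc m))) + r'"
    using e1 e2 by simp
  have q1: "qb (Suc m) (qv * ?B)" unfolding qv_def mono2_def by (simp add: mult_single) (rule qb_single, simp)
  have q2: "qb (Suc m) (qinv * ?A)" unfolding qinv_def mono2_def by (simp add: mult_single) (rule qb_single, simp)
  have qT: "qb 0 ?T" using qb0_basic qb_add by auto
  have q3: "qb (Suc m) (?T * ?A)" using qb_mult[OF qT qb_single[of "int (Suc m)" "Suc m" 0 1]] by simp
  have q4: "qb (Suc m) (?T * ?B)" using qb_mult[OF qT qb_single[of "- int (Suc m)" "Suc m" 0 1]] by simp
  have q5: "qb (Suc m) (W * r)" using qb_mult[OF qb_W r(1)] by simp
  have "qb (Suc m) r'" unfolding r'_def using q1 q2 q3 q4 q5 by (intro qb_add)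
  with eq show ?case by blast
qed

lemma mk_W_q: "mk phq W = W"
  by (simp add: W_def good_phq mk_add mk_single qv_def qinv_def tau_def tauinv_def mono2_def phq_def ac_simps)

lemma mk_W_t: "mk pht W = W"
  by (simp add: W_def good_pht mk_add mk_single qv_def qinv_def tau_def tauinv_def mono2_def pht_def ac_simps)

lemma symq: "mk phq p = p \<Longrightarrow> Poly_Mapping.lookup p (- a, b) = Poly_Mapping.lookup p (a, b)"
  by (metis good_lookup good_phq phq_def fst_conv snd_conv)

lemma symt: "mk pht p = p \<Longrightarrow> Poly_Mapping.lookup p (a, - b) = Poly_Mapping.lookup p (a, b)"
  by (metis good_lookup good_pht pht_def fst_conv snd_conv)

definition okM :: "laurent2 \<Rightarrow> bool" where
  "okM c \<longleftrightarrow> Poly_Mapping.keys c \<subseteq> {0} \<times> UNIV \<and>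
     (\<forall>k::int. Poly_Mapping.lookup c (0, k) = Poly_Mapping.lookup c (0, - k))"

lemma decomp:
  "qb h p \<Longrightarrow> mk phq p = p \<Longrightarrow> mk pht p = p \<Longrightarrow>
    \<exists>M. (\<forall>g. okM (M g)) \<and> p = (\<Sum>g\<le>h. M g * W ^ g)"
proof (induction h arbitrary: p)
  case 0
  have "okM p" unfolding okM_def
  proof
    show "Poly_Mapping.keys p \<subseteq> {0} \<times> UNIV" using 0(1) unfolding qb_def by force
    show "\<forall>k. Poly_Mapping.lookup p (0, k) = Poly_Mapping.lookup p (0, - k)"
      using symt[OF 0(3)] by metis
  qed
  then show ?case by (intro exI[of _ "\<lambda>g. p"]) simp
next
  case (Suc h p)
  let ?H = "int (Suc h)"
  define cf where "cf = (\<lambda>x::int\<times>int. if fst x = 0 then Poly_Mapping.lookup p (?H, snd x) else 0)"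
  have fin: "finite {x. cf x \<noteq> 0}"
  proof (rule finite_subset)
    show "{x. cf x \<noteq> 0} \<subseteq> (\<lambda>y. (0, snd y)) ` Poly_Mapping.keys p"
    proof
      fix x assume "x \<in> {x. cf x \<noteq> 0}"
      then have "fst x = 0" "(?H, snd x) \<in> Poly_Mapping.keys p" by (auto simp: cf_def in_keys_iff split: if_splits)
      then show "x \<in> (\<lambda>y. (0, snd y)) ` Poly_Mapping.keys p"
        by (metis image_eqI prod.collapse snd_conv)
    qed
  qed simp
  define C :: laurent2 where "C = Abs_poly_mapping cf"
  have lC: "Poly_Mapping.lookup C x = cf x" for x unfolding C_def using fin by simp
  obtain r where r: "qb h r" "W ^ (Suc h) = sg ?H + sg (- ?H) + r" using W_power by blast
  define p' where "p' = p - C * W ^ Suc h"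
  have qC: "qb 0 C" unfolding qb_iff by (simp add: lC cf_def)
  have qCr: "qb h (C * r)" using qb_mult[OF qC r(1)] by simp
  have lp': "Poly_Mapping.lookup p' (a, b) = Poly_Mapping.lookup p (a, b)
      - (if a = ?H then Poly_Mapping.lookup p (?H, b) else 0)
      - (if a = - ?H then Poly_Mapping.lookup p (?H, b) else 0)
      - Poly_Mapping.lookup (C * r) (a, b)" for a b
    unfolding p'_def r(2) by (simp add: algebra_simps lookup_add lookup_minus lookup_mult_single1 lC cf_def)
  have "qb h p'" unfolding qb_iff
  proof (intro allI impI)
    fix a b assume a: "int h < \<bar>a\<bar>"
    have z: "Poly_Mapping.lookup (C * r) (a, b) = 0" using qCr a unfolding qb_iff by blast
    consider "a = ?H" | "a = - ?H" | "\<bar>a\<bar> > ?H" using a by linarith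
    then show "Poly_Mapping.lookup p' (a, b) = 0"
    proof cases
      case 1 then show ?thesis using lp' z by simp
    next
      case 2 then show ?thesis using lp' z symq[OF Suc(3), of ?H b] by simp
    next
      case 3
      then have "Poly_Mapping.lookup p (a, b) = 0" using Suc(2) unfolding qb_iff by blast
      with 3 show ?thesis using lp' z by auto
    qed
  qed
  have CqC: "mk phq C = C"
    by (rule poly_mapping_eqI) (simp add: good_lookup good_phq lC cf_def phq_def)
  have CtC: "mk pht C = C"
    by (rule poly_mapping_eqI) (simp add: good_lookup good_pht lC cf_def pht_def symt[OF Suc(4)])
  have "mk phq p' = p'" unfolding p'_def
    by (simp add: good_phq mk_diff mk_mult mk_power mk_W_q CqC Suc(3))
  moreover have "mk pht p' = p'" unfolding p'_def
    by (simp add: good_pht mk_diff mk_mult mk_power mk_W_t CtC Suc(4))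
  ultimately obtain M' where M': "\<forall>g. okM (M' g)" "p' = (\<Sum>g\<le>h. M' g * W ^ g)"
    using Suc.IH[OF \<open>qb h p'\<close>] by blast
  have okC: "okM C" unfolding okM_def
  proof
    show "Poly_Mapping.keys C \<subseteq> {0} \<times> UNIV"
      by (auto simp: in_keys_iff lC cf_def split: if_splits)
    show "\<forall>k. Poly_Mapping.lookup C (0, k) = Poly_Mapping.lookup C (0, - k)"
      by (simp add: lC cf_def symt[OF Suc(4)])
  qed
  define M where "M = M'(Suc h := C)"
  have "(\<Sum>g\<le>Suc h. M g * W ^ g) = (\<Sum>g\<le>h. M' g * W ^ g) + C * W ^ Suc h"
    by (simp add: M_def)
  also have "\<dots> = p" using M'(2) p'_def by (metis diff_add_cancel)
  finally have "p = (\<Sum>g\<le>Suc h. M g * W ^ g)" by simp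
  moreover have "\<forall>g. okM (M g)" using M'(1) okC by (simp add: M_def)
  ultimately show ?case by blast
qed

theorem mainTheorem7:
  shows "\<exists>N :: nat \<Rightarrow> nat \<Rightarrow> laurent2.
    (\<forall>h g. Poly_Mapping.keys (N h g) \<subseteq> {0} \<times> UNIV \<and>
           (\<forall>k::int. Poly_Mapping.lookup (N h g) (0, k) = Poly_Mapping.lookup (N h g) (0, - k))) \<and>
    (\<forall>h. fps_nth infinite_product h =
          (\<Sum>g\<le>h. N h g * (qinv + (tau + tauinv) + qv) ^ g))"
proof -
  have "\<forall>h. \<exists>M. (\<forall>g. okM (M g)) \<and> fps_nth infinite_product h = (\<Sum>g\<le>h. M g * W ^ g)"
    using decomp[OF inf_qb inf_sym_q inf_sym_t] by blast
  then obtain N where N: "\<And>h. (\<forall>g. okM (N h g)) \<and> fps_nth infinite_product h = (\<Sum>g\<le>h. N h g * W ^ g)"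
    by metis
  show ?thesis
    by (rule exI[of _ N]) (use N in \<open>auto simp: okM_def W_def\<close>)
qed

end
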